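(* Let $\lambda$ be a generic normalized additively alternating $n\times n$ complex matrix with biresidue matrix $b$, and let $I\subseteq\{0,\dots,n-2\}$ be such that $\{i,i+1\}$ is a smoothable edge of $b$ for every $i\in I$. Then no linear combination $\sum_{i\in I}\nu_i\boldsymbol\theta_i$ with all $\nu_i\in\mathbb{Z}_{\ge0}$ is an obstructed weight.
   Context: Additively alternating: $\lambda_{ji}=-\lambda_{ij}$; normalized: rows sum to $0$. $\lambda$ is generic if it has rank $n-1$ and every relevant $\operatorname{EExp}(\lambda)$-Hochschild-contributing weight is $\lambda$-Poisson-contributing, where $\operatorname{EExp}(\lambda)=(e^{\lambda_{ij}})$; a weight $\mathbf w\in\mathbb{Z}^n$ is relevant if $w_i\ge-1$, $\sum w_i=0$; $q$-Hochschild-contributing if $w_i\ge-1$ for all $i$ and $\prod_jq_{ij}^{w_j}=1$ whenever $w_i\ge0$; $\lambda$-Poisson-contributing if $w_i\ge-1$ for all $i$ and $\sum_j\lambda_{ij}w_j=0$ whenever $w_i\ge0$. The biresidue matrix is the unique normalized alternating $b$ with $b|_\Delta=(\lambda|_\Delta)^{-1}$, $\Delta=\{z\in\mathbb{C}^n:\sum z_i=0\}$. The edge $\{i,j\}$ is smoothable if $b_{ij}\ne0$ and $(b_{jk}+b_{ki})/b_{ij}\in\mathbb{Z}_{\ge0}$ for $k\ne i,j$; its smoothable weight has entries $-1$ at $i,j$ and $(b_{jk}+b_{ki})/b_{ij}$ at $k\ne i,j$; $\boldsymbol\theta_i$ denotes the smoothable weight of $\{i,i+1\}$. A weight $\mathbf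 w\in\mathbb{Z}^n$ is obstructed if there are three distinct indices $i,j,k$ with $w_i=w_j=w_k=-1$, $w_\ell\ge0$ for all $\ell\ne i,j,k$, and $\mathbf w$ is a complex linear combination of the rows $b_{i\bullet},b_{j\bullet},b_{k\bullet}$. *)

theory Defs
  imports Complex_Main "Jordan_Normal_Form.DL_Rank"
begin

text \<open>Conventions: an n x n complex matrix is a function nat => nat => complex,
  only the entries with indices < n are relevant (indices 0..n-1).
  A weight is a function nat => int, only the entries with indices < n are relevant.\<close>

definition additively_alternating :: "nat \<Rightarrow> (nat \<Rightarrow> nat \<Rightarrow> complex) \<Rightarrow> bool" where
  "additively_alternating n l \<longleftrightarrow> (\<forall>i<n. \<forall>j<n. l j i = - l i j)"

definition normalized :: "nat \<Rightarrow> (nat \<Rightarrow> nat \<Rightarrow> complex) \<Rightarrow> bool" where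
  "normalized n l \<longleftrightarrow> (\<forall>i<n. (\<Sum>j<n. l i j) = 0)"

definition EExp :: "(nat \<Rightarrow> nat \<Rightarrow> complex) \<Rightarrow> nat \<Rightarrow> nat \<Rightarrow> complex" where
  "EExp l = (\<lambda>i j. exp (l i j))"

definition relevant_weight :: "nat \<Rightarrow> (nat \<Rightarrow> int) \<Rightarrow> bool" where
  "relevant_weight n w \<longleftrightarrow> (\<forall>i<n. w i \<ge> -1) \<and> (\<Sum>i<n. w i) = 0"

definition hochschild_contributing :: "nat \<Rightarrow> (nat \<Rightarrow> nat \<Rightarrow> complex) \<Rightarrow> (nat \<Rightarrow> int) \<Rightarrow> bool" where
  "hochschild_contributing n q w \<longleftrightarrow>
     (\<forall>i<n. w i \<ge> -1) \<and> (\<forall>i<n. w i \<ge> 0 \<longrightarrow> (\<Prod>j<n. q i j powi w j) = 1)"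

definition poisson_contributing :: "nat \<Rightarrow> (nat \<Rightarrow> nat \<Rightarrow> complex) \<Rightarrow> (nat \<Rightarrow> int) \<Rightarrow> bool" where
  "poisson_contributing n l w \<longleftrightarrow>
     (\<forall>i<n. w i \<ge> -1) \<and> (\<forall>i<n. w i \<ge> 0 \<longrightarrow> (\<Sum>j<n. l i j * of_int (w j)) = 0)"

definition matrix_of :: "nat \<Rightarrow> (nat \<Rightarrow> nat \<Rightarrow> complex) \<Rightarrow> complex mat" where
  "matrix_of n l = mat n n (\<lambda>(i, j). l i j)"

definition generic :: "nat \<Rightarrow> (nat \<Rightarrow> nat \<Rightarrow> complex) \<Rightarrow> bool" where
  "generic n l \<longleftrightarrow> vec_space.rank n (matrix_of n l) = n - 1 \<and>
     (\<forall>w. relevant_weight n w \<longrightarrow> hochschild_contributing n (EExp l) w \<longrightarrow> poisson_contributing n l w)"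

definition Delta :: "nat \<Rightarrow> (nat \<Rightarrow> complex) set" where
  "Delta n = {z. (\<Sum>i<n. z i) = 0}"

definition mat_apply :: "nat \<Rightarrow> (nat \<Rightarrow> nat \<Rightarrow> complex) \<Rightarrow> (nat \<Rightarrow> complex) \<Rightarrow> nat \<Rightarrow> complex" where
  "mat_apply n A z = (\<lambda>i. \<Sum>j<n. A i j * z j)"

definition biresidue :: "nat \<Rightarrow> (nat \<Rightarrow> nat \<Rightarrow> complex) \<Rightarrow> (nat \<Rightarrow> nat \<Rightarrow> complex) \<Rightarrow> bool" where
  "biresidue n l b \<longleftrightarrow> normalized n b \<and> additively_alternating n b \<and>
     (\<forall>z\<in>Delta n. \<forall>i<n. mat_apply n b (mat_apply n l z) i = z i) \<and>
     (\<forall>z\<in>Delta n. \<forall>i<n. mat_apply n l (mat_apply n b z) i = z i)"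

definition smoothable :: "nat \<Rightarrow> (nat \<Rightarrow> nat \<Rightarrow> complex) \<Rightarrow> nat \<Rightarrow> nat \<Rightarrow> bool" where
  "smoothable n b i j \<longleftrightarrow> i < n \<and> j < n \<and> i \<noteq> j \<and> b i j \<noteq> 0 \<and>
     (\<forall>k<n. k \<noteq> i \<longrightarrow> k \<noteq> j \<longrightarrow> (\<exists>m::nat. (b j k + b k i) / b i j = of_nat m))"

definition smoothable_weight :: "nat \<Rightarrow> (nat \<Rightarrow> nat \<Rightarrow> complex) \<Rightarrow> nat \<Rightarrow> nat \<Rightarrow> nat \<Rightarrow> int" where
  "smoothable_weight n b i j k =
     (if k = i \<or> k = j then -1 else int (THE m::nat. (b j k + b k i) / b i j = of_nat m))"

definition theta :: "nat \<Rightarrow> (nat \<Rightarrow> nat \<Rightarrow> complex) \<Rightarrow> nat \<Rightarrow> nat \<Rightarrow> int" where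
  "theta n b i = smoothable_weight n b i (i + 1)"

definition obstructed :: "nat \<Rightarrow> (nat \<Rightarrow> nat \<Rightarrow> complex) \<Rightarrow> (nat \<Rightarrow> int) \<Rightarrow> bool" where
  "obstructed n b w \<longleftrightarrow> (\<exists>i<n. \<exists>j<n. \<exists>k<n. i \<noteq> j \<and> i \<noteq> k \<and> j \<noteq> k \<and>
     w i = -1 \<and> w j = -1 \<and> w k = -1 \<and>
     (\<forall>l<n. l \<noteq> i \<longrightarrow> l \<noteq> j \<longrightarrow> l \<noteq> k \<longrightarrow> w l \<ge> 0) \<and>
     (\<exists>c1 c2 c3 :: complex. \<forall>l<n. of_int (w l) = c1 * b i l + c2 * b j l + c3 * b k l))"

end

theory Submission
  imports Defs
begin

lemma alt_diag:
  assumes "additively_alternating n b" "k < n"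
  shows "b k k = 0"
proof -
  have "b k k = - b k k" using assms unfolding additively_alternating_def by blast
  then show ?thesis by simp
qed

lemma theta_val:
  assumes alt: "additively_alternating n b" and sm: "smoothable n b i (i+1)" and k: "k < n"
  shows "of_int (theta n b i k) = (b k i - b k (i+1)) / b i (i+1)"
    and "k \<noteq> i \<Longrightarrow> k \<noteq> i+1 \<Longrightarrow> theta n b i k \<ge> 0"
proof -
  have i: "i < n" "i+1 < n" and nz: "b i (i+1) \<noteq> 0" using sm unfolding smoothable_def by auto
  have bii: "b i i = 0" "b (i+1) (i+1) = 0" using alt_diag[OF alt] i by auto
  have anti: "\<And>x y. x < n \<Longrightarrow> y < n \<Longrightarrow> b y x = - b x y" using alt unfolding additively_alternating_def by blast
  show "of_int (theta n b i k) = (b k i - b k (i+1)) / b i (i+1)"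
  proof (cases "k = i \<or> k = i+1")
    case True
    then show ?thesis
    proof
      assume "k = i" then show ?thesis using nz bii by (simp add: theta_def smoothable_weight_def)
    next
      assume "k = i+1" then show ?thesis using nz bii anti[of i "i+1"] i by (simp add: theta_def smoothable_weight_def)
    qed
  next
    case False
    then obtain m :: nat where m: "(b (i+1) k + b k i) / b i (i+1) = of_nat m"
      using sm k unfolding smoothable_def by auto
    have "(THE m::nat. (b (i+1) k + b k i) / b i (i+1) = of_nat m) = m"
      using m by (intro the_equality) auto
    then have "theta n b i k = int m" using False by (simp add: theta_def smoothable_weight_def)
    moreover have "b (i+1) k + b k i = b k i - b k (i+1)" using anti[of k "i+1"] k i by simp
    ultimately show ?thesis using m by simp
  qed
  show "k \<noteq> i \<Longrightarrow> k \<noteq> i+1 \<Longrightarrow> theta n b i k \<ge> 0"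
    by (simp add: theta_def smoothable_weight_def)
qed

lemma kernel:
  assumes bir: "biresidue n l b" and np: "n > 0"
    and D: "\<forall>k<n. (\<Sum>j<n. b k j * D j) = 0"
  shows "\<exists>t. \<forall>j<n. D j = t"
proof -
  define t where "t = (\<Sum>j<n. D j) / of_nat n"
  define E where "E = (\<lambda>j. D j - t)"
  have nb: "\<forall>k<n. (\<Sum>j<n. b k j) = 0" using bir unfolding biresidue_def normalized_def by blast
  have "(\<Sum>j<n. E j) = (\<Sum>j<n. D j) - of_nat n * t" by (simp add: E_def sum_subtractf)
  also have "\<dots> = 0" using np by (simp add: t_def)
  finally have Ed: "E \<in> Delta n" by (simp add: Delta_def)
  have bE: "\<forall>k<n. mat_apply n b E k = 0"
  proof (intro allI impI)
    fix k assume k: "k < n"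
    have "mat_apply n b E k = (\<Sum>j<n. b k j * D j) - t * (\<Sum>j<n. b k j)"
      by (simp add: mat_apply_def E_def right_diff_distrib sum_subtractf sum_distrib_left mult.commute)
    then show "mat_apply n b E k = 0" using D nb k by simp
  qed
  have "\<forall>i<n. E i = 0"
  proof (intro allI impI)
    fix i assume i: "i < n"
    have "mat_apply n l (mat_apply n b E) i = E i" using bir Ed i unfolding biresidue_def by blast
    moreover have "mat_apply n l (mat_apply n b E) i = 0" using bE by (simp add: mat_apply_def)
    ultimately show "E i = 0" by simp
  qed
  then show ?thesis by (auto simp: E_def)
qed

lemma tele:
  assumes "a \<le> s"
  shows "(\<Sum>i = a..<s. (f i - f (Suc i)) :: complex) = f a - f s"
  using assms
proof (induction s)
  case 0 then show ?case by simp
next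
  case (Suc s)
  show ?case
  proof (cases "a \<le> s")
    case True
    then show ?thesis using Suc by (simp add: sum.atLeastLessThan_Suc)
  next
    case False
    then have "a = Suc s" using Suc.prems by simp
    then show ?thesis by simp
  qed
qed

lemma core:
  fixes n :: nat and l b :: "nat \<Rightarrow> nat \<Rightarrow> complex" and I :: "nat set" and \<nu> :: "nat \<Rightarrow> nat"
    and w :: "nat \<Rightarrow> int"
  assumes bir: "biresidue n l b"
    and Isub: "I \<subseteq> {i. i + 2 \<le> n}"
    and sm: "\<forall>i\<in>I. smoothable n b i (i + 1)"
    and ord: "a < s" "s < m" "m < n"
    and w_def: "w = (\<lambda>k. \<Sum>i\<in>I. int (\<nu> i) * theta n b i k)"
    and wa: "w a = -1" and ws: "w s = -1" and wm: "w m = -1"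
    and span: "\<forall>x<n. of_int (w x) = ca * b a x + cs * b s x + cm * b m x"
  shows False
proof -
  have alt: "additively_alternating n b" using bir unfolding biresidue_def by blast
  have nb: "\<forall>k<n. (\<Sum>j<n. b k j) = 0" using bir unfolding biresidue_def normalized_def by blast
  have anti: "\<And>x y. x < n \<Longrightarrow> y < n \<Longrightarrow> b y x = - b x y"
    using alt unfolding additively_alternating_def by blast
  have Iless: "I \<subseteq> {..<n}" using Isub by auto
  have finI: "finite I" using Iless finite_subset by blast
  have np: "n > 0" using ord by simp
  define \<gamma> where "\<gamma> = (\<lambda>i. if i \<in> I then of_nat (\<nu> i) / b i (i+1) else (0::complex))"
  define Z where "Z = (\<lambda>j. \<gamma> j - (if j = 0 then 0 else \<gamma> (j - 1)))"
  define C where "C = (\<lambda>j. (if j = a then ca else 0) + (if j = s then cs else 0) + (if j = m then cm else (0::complex)))"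
  have n1: "n - 1 \<notin> I" using Isub np by auto
  have \<gamma>0: "\<gamma> (n - 1) = 0" using n1 by (simp add: \<gamma>_def)
  have termI: "of_int (int (\<nu> i) * theta n b i k) = \<gamma> i * (b k i - b k (i+1))"
    if "i \<in> I" "k < n" for i k
  proof -
    have "of_int (theta n b i k) = (b k i - b k (i+1)) / b i (i+1)"
      using theta_val(1)[OF alt _ that(2)] sm that(1) by blast
    then show ?thesis using that by (simp add: \<gamma>_def)
  qed
  have sumJ: "of_int (\<Sum>i\<in>J. int (\<nu> i) * theta n b i k) = (\<Sum>i\<in>J. \<gamma> i * (b k i - b k (i+1)))"
    if "J \<subseteq> I" "k < n" for J k
    using that termI by (simp add: subset_eq)
  have sumx: "(\<Sum>i\<in>I \<inter> {..<x}. \<gamma> i * (b k i - b k (i+1))) = (\<Sum>i<x. \<gamma> i * (b k i - b k (i+1)))"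
    for x k
    by (rule sum.mono_neutral_left) (auto simp: \<gamma>_def)
  have wk: "of_int (w k) = (\<Sum>i<n. \<gamma> i * (b k i - b k (i+1)))" if "k < n" for k
  proof -
    have "I \<inter> {..<n} = I" using Iless by auto
    then show ?thesis using sumJ[of I k] sumx[where x=n and k=k] that by (simp add: w_def)
  qed
  have prefix: "(\<Sum>j<Suc i. Z j) = \<gamma> i" for i
    by (induction i) (simp_all add: Z_def)
  obtain n' where n': "n = Suc n'" using np not0_implies_Suc by blast
  have bZ: "of_int (w k) = (\<Sum>j<n. b k j * Z j)" if k: "k < n" for k
  proof -
    have A: "(\<Sum>j<n. b k j * (if j = 0 then 0 else \<gamma> (j - 1))) = (\<Sum>i<n'. b k (Suc i) * \<gamma> i)"
      unfolding n' by (subst sum.lessThan_Suc_shift) simp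
    have B: "(\<Sum>i<n. \<gamma> i * b k (i+1)) = (\<Sum>i<n'. b k (Suc i) * \<gamma> i)"
      using \<gamma>0 unfolding n' by (simp add: mult.commute)
    have "(\<Sum>j<n. b k j * Z j) = (\<Sum>j<n. b k j * \<gamma> j) - (\<Sum>j<n. b k j * (if j = 0 then 0 else \<gamma> (j - 1)))"
      by (simp add: Z_def right_diff_distrib sum_subtractf)
    also have "\<dots> = (\<Sum>i<n. \<gamma> i * b k i) - (\<Sum>i<n. \<gamma> i * b k (i+1))"
      using A B by (simp add: mult.commute)
    also have "\<dots> = (\<Sum>i<n. \<gamma> i * (b k i - b k (i+1)))"
      by (simp add: right_diff_distrib sum_subtractf)
    finally show ?thesis using wk[OF k] by simp
  qed
  have delta: "(\<Sum>j<N. f j * (if j = x then c else 0)) = (if x < N then f x * c else 0)"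
    for N x c and f :: "nat \<Rightarrow> complex"
  proof -
    have "(\<Sum>j<N. f j * (if j = x then c else 0)) = (\<Sum>j<N. if j = x then f x * c else 0)"
      by (rule sum.cong) auto
    then show ?thesis by simp
  qed
  have bC: "(\<Sum>j<n. b k j * C j) = b k a * ca + b k s * cs + b k m * cm" for k
    using ord by (simp add: C_def distrib_left sum.distrib delta)
  have Dk: "\<forall>k<n. (\<Sum>j<n. b k j * (Z j + C j)) = 0"
  proof (intro allI impI)
    fix k assume k: "k < n"
    have "(\<Sum>j<n. b k j * (Z j + C j)) = of_int (w k) + (b k a * ca + b k s * cs + b k m * cm)"
      using bZ[OF k] bC[of k] by (simp add: distrib_left sum.distrib)
    also have "\<dots> = 0" using span k anti[of a k] anti[of s k] anti[of m k] ord
      by (simp add: algebra_simps)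
    finally show "(\<Sum>j<n. b k j * (Z j + C j)) = 0" .
  qed
  obtain t where t: "\<forall>j<n. Z j + C j = t" using kernel[OF bir np Dk] by blast
  have sumw: "(\<Sum>k<n. (of_int (w k) :: complex)) = 0"
  proof -
    have "(\<Sum>k<n. (of_int (w k) :: complex)) = (\<Sum>k<n. \<Sum>j<n. b k j * Z j)"
      using bZ by simp
    also have "\<dots> = (\<Sum>j<n. \<Sum>k<n. b k j * Z j)" by (rule sum.swap)
    also have "\<dots> = (\<Sum>j<n. - ((\<Sum>k<n. b j k) * Z j))"
    proof (rule sum.cong[OF refl])
      fix j assume "j \<in> {..<n}"
      then have "(\<Sum>k<n. b k j * Z j) = (\<Sum>k<n. - (b j k * Z j))"
        by (intro sum.cong refl) (simp add: anti[of j])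
      then show "(\<Sum>k<n. b k j * Z j) = - ((\<Sum>k<n. b j k) * Z j)"
        by (simp add: sum_distrib_right sum_negf)
    qed
    also have "\<dots> = 0" using nb by simp
    finally show ?thesis .
  qed
  have sumwZ: "(\<Sum>k<n. of_int (w k) * Z k) = 0"
  proof -
    define X where "X = (\<Sum>k<n. \<Sum>j<n. Z k * b k j * Z j)"
    have "(\<Sum>k<n. of_int (w k) * Z k) = X"
      unfolding X_def
    proof (intro sum.cong refl)
      fix k assume "k \<in> {..<n}"
      then show "of_int (w k) * Z k = (\<Sum>j<n. Z k * b k j * Z j)"
        using bZ[of k] by (simp add: sum_distrib_left sum_distrib_right mult_ac)
    qed
    have "X = (\<Sum>j<n. \<Sum>k<n. Z k * b k j * Z j)" unfolding X_def by (rule sum.swap)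
    also have "\<dots> = (\<Sum>j<n. \<Sum>k<n. - (Z j * b j k * Z k))"
    proof (intro sum.cong refl)
      fix j k assume "j \<in> {..<n}" "k \<in> {..<n}"
      then have "b k j = - b j k" using anti[of j k] by simp
      then show "Z k * b k j * Z j = - (Z j * b j k * Z k)" by (simp add: mult_ac)
    qed
    also have "\<dots> = - X" unfolding X_def by (simp add: sum_negf)
    finally have "X = 0" by simp
    then show ?thesis using \<open>(\<Sum>k<n. of_int (w k) * Z k) = X\<close> by simp
  qed
  have sumwC: "(\<Sum>k<n. of_int (w k) * C k) = - (ca + cs + cm)"
  proof -
    have "(\<Sum>k<n. of_int (w k) * C k) = of_int (w a) * ca + of_int (w s) * cs + of_int (w m) * cm"
      using ord by (simp add: C_def distrib_left sum.distrib delta)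
    then show ?thesis using wa ws wm by simp
  qed
  have sumC: "(\<Sum>k<n. C k) = ca + cs + cm"
    using ord by (simp add: C_def sum.distrib)
  have sumZ: "(\<Sum>k<n. Z k) = 0" using prefix[of n'] \<gamma>0 n' by simp
  have Zt: "\<forall>k<n. Z k = t - C k" using t by (auto simp: algebra_simps)
  have "(\<Sum>k<n. of_int (w k) * Z k) = (\<Sum>k<n. t * of_int (w k) - of_int (w k) * C k)"
    using Zt by (intro sum.cong refl) (auto simp: algebra_simps)
  also have "\<dots> = t * (\<Sum>k<n. of_int (w k)) - (\<Sum>k<n. of_int (w k) * C k)"
    by (simp add: sum_subtractf sum_distrib_left)
  finally have csum: "ca + cs + cm = 0" using sumwZ sumw sumwC by simp
  have "(\<Sum>k<n. Z k) = (\<Sum>k<n. t - C k)" using Zt by (intro sum.cong refl) auto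
  also have "\<dots> = of_nat n * t - (ca + cs + cm)" using sumC by (simp add: sum_subtractf)
  finally have "of_nat n * t = 0" using sumZ csum by simp
  then have t0: "t = 0" using np by simp
  have ZC: "\<forall>j<n. Z j = - C j" using Zt t0 by simp
  have \<gamma>form: "\<gamma> i = - ((if a \<le> i then ca else 0) + (if s \<le> i then cs else 0) + (if m \<le> i then cm else 0))"
    if i: "i < n" for i
  proof -
    have "\<gamma> i = (\<Sum>j<Suc i. Z j)" using prefix by simp
    also have "\<dots> = (\<Sum>j<Suc i. - C j)" using ZC i by (intro sum.cong refl) auto
    also have "\<dots> = - (\<Sum>j<Suc i. C j)" by (simp add: sum_negf)
    also have "(\<Sum>j<Suc i. C j) = (if a \<le> i then ca else 0) + (if s \<le> i then cs else 0) + (if m \<le> i then cm else 0)"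
      unfolding C_def sum.distrib by (simp add: less_Suc_eq_le)
    finally show ?thesis .
  qed
  define P where "P = (\<lambda>k. \<Sum>i\<in>I \<inter> {..<s}. int (\<nu> i) * theta n b i k)"
  define Q where "Q = (\<lambda>k. \<Sum>i\<in>I - {..<s}. int (\<nu> i) * theta n b i k)"
  have wPQ: "w k = P k + Q k" for k
    unfolding w_def P_def Q_def using finI by (simp add: sum.Int_Diff)
  have Pval: "of_int (P k) = - ca * (b k a - b k s)" if k: "k < n" for k
  proof -
    have "of_int (P k) = (\<Sum>i<s. \<gamma> i * (b k i - b k (i+1)))"
      unfolding P_def using sumJ[of "I \<inter> {..<s}" k] sumx[where x=s and k=k] k by simp
    also have "\<dots> = (\<Sum>i<s. if a \<le> i then - ca * (b k i - b k (Suc i)) else 0)"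
      using ord by (intro sum.cong refl) (auto simp: \<gamma>form)
    also have "\<dots> = (\<Sum>i\<in>{..<s} \<inter> {a..}. - ca * (b k i - b k (Suc i)))"
      by (auto simp add: sum.inter_restrict intro!: sum.cong)
    also have "{..<s} \<inter> {a..} = {a..<s}" by auto
    also have "(\<Sum>i\<in>{a..<s}. - ca * (b k i - b k (Suc i))) = - ca * (b k a - b k s)"
      using tele[of a s "b k"] ord by (simp add: sum_negf sum_distrib_left[symmetric])
    finally show ?thesis .
  qed
  have baa: "b a a = 0" "b s s = 0" "b m m = 0" using alt_diag[OF alt] ord by auto
  have "of_int (P a) = (of_int (P s) :: complex)"
    using Pval[of a] Pval[of s] ord baa anti[of a s] by simp
  then have PaPs: "P a = P s" by simp
  have Qs: "of_int (Q s) = (of_int (w s) - of_int (P s) :: complex)" using wPQ[of s] by simp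
  have Qm: "of_int (Q m) = (of_int (w m) - of_int (P m) :: complex)" using wPQ[of m] by simp
  have "of_int (Q s) = (of_int (Q m) :: complex)"
  proof -
    have e1: "of_int (Q s) = cm * b m s"
      using Qs span Pval[of s] ord baa anti[of a s] by (simp add: algebra_simps)
    have e2: "of_int (Q m) = ca * b a m + cs * b s m + ca * (b m a - b m s)"
      using Qm span Pval[of m] ord baa by (simp add: algebra_simps)
    have "ca * b s m + cs * b s m = (ca + cs + cm) * b s m - cm * b s m" by (simp add: algebra_simps)
    then have cc: "ca * b s m + cs * b s m = - (cm * b s m)" using csum by simp
    have e2': "of_int (Q m) = ca * b s m + cs * b s m"
      using e2 anti[of a m] anti[of s m] ord by (simp add: algebra_simps)
    have e1': "of_int (Q s) = - (cm * b s m)"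
      using e1 anti[of s m] ord by simp
    show ?thesis using e1' e2' cc by simp
  qed
  then have QsQm: "Q s = Q m" by simp
  have Pm: "P m \<ge> 0"
    unfolding P_def
  proof (rule sum_nonneg)
    fix i assume "i \<in> I \<inter> {..<s}"
    then have "i \<in> I" "m \<noteq> i" "m \<noteq> i + 1" using ord by auto
    then show "0 \<le> int (\<nu> i) * theta n b i m"
      using theta_val(2)[OF alt _ \<open>m < n\<close>] sm by simp
  qed
  have Qa: "Q a \<ge> 0"
    unfolding Q_def
  proof (rule sum_nonneg)
    fix i assume "i \<in> I - {..<s}"
    then have "i \<in> I" "a \<noteq> i" "a \<noteq> i + 1" using ord by auto
    then show "0 \<le> int (\<nu> i) * theta n b i a"
      using theta_val(2)[OF alt _, of i a] sm ord by simp
  qed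
  show False using wPQ[of a] wPQ[of s] wPQ[of m] wa ws wm PaPs QsQm Pm Qa by linarith
qed

theorem lemma5p3:
  fixes n :: nat and l b :: "nat \<Rightarrow> nat \<Rightarrow> complex" and I :: "nat set"
  assumes "additively_alternating n l"
    and "normalized n l"
    and "generic n l"
    and "biresidue n l b"
    and "I \<subseteq> {i. i + 2 \<le> n}"
    and "\<forall>i\<in>I. smoothable n b i (i + 1)"
  shows "\<forall>\<nu> :: nat \<Rightarrow> nat. \<not> obstructed n b (\<lambda>k. \<Sum>i\<in>I. int (\<nu> i) * theta n b i k)"
proof (intro allI notI)
  fix \<nu> :: "nat \<Rightarrow> nat"
  define W where "W = (\<lambda>k. \<Sum>i\<in>I. int (\<nu> i) * theta n b i k)"
  assume "obstructed n b (\<lambda>k. \<Sum>i\<in>I. int (\<nu> i) * theta n b i k)"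
  then have ob: "obstructed n b W" by (simp add: W_def)
  have key: False
    if "a < s" "s < m" "m < n" "W a = -1" "W s = -1" "W m = -1"
      "\<forall>x<n. of_int (W x) = ca * b a x + cs * b s x + cm * b m x" for a s m ca cs cm
    using core[OF assms(4) assms(5) assms(6) that(1,2,3) W_def that(4,5,6,7)] .
  from ob obtain i j k c1 c2 c3 where ijk: "i < n" "j < n" "k < n" "i \<noteq> j" "i \<noteq> k" "j \<noteq> k"
    and w: "W i = -1" "W j = -1" "W k = -1"
    and sp: "\<forall>x<n. of_int (W x) = c1 * b i x + c2 * b j x + c3 * b k x"
    unfolding obstructed_def by blast
  have "i<j \<and> j<k \<or> i<k \<and> k<j \<or> j<i \<and> i<k \<or> j<k \<and> k<i \<or> k<i \<and> i<j \<or> k<j \<and> j<i"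
    using ijk by arith
  then show False
  proof (elim disjE conjE)
    assume "i < j" "j < k" then show False
      using key[of i j k c1 c2 c3] ijk w sp by blast
  next
    assume "i < k" "k < j" then show False
      using key[of i k j c1 c3 c2] ijk w sp by (simp add: ac_simps)
  next
    assume "j < i" "i < k" then show False
      using key[of j i k c2 c1 c3] ijk w sp by (simp add: ac_simps)
  next
    assume "j < k" "k < i" then show False
      using key[of j k i c2 c3 c1] ijk w sp by (simp add: ac_simps)
  next
    assume "k < i" "i < j" then show False
      using key[of k i j c3 c1 c2] ijk w sp by (simp add: ac_simps)
  next
    assume "k < j" "j < i" then show False
      using key[of k j i c3 c2 c1] ijk w sp by (simp add: ac_simps)
  qed
qed
end
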